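(* Let $p:[0,2\pi]\to[1,\infty)$ be a measurable, essentially bounded, $2\pi$-periodic, $\log$-H\"older continuous function, and let $q:[0,2\pi]\to[1,\infty)$ satisfy $\frac1{p(\theta)}+\frac1{q(\theta)}=1$ for every $\theta\in[0,2\pi]$. For $1/2<r<1$ and $z=|z|e^{i\theta}\in\mathbb{D}$ define $\varphi:[0,2\pi]\to(0,\infty)$ by $\varphi(t)=\frac{(1-|z|)^{1/q(\theta)}}{|1-|z|re^{i(t-\theta)}|}$. Then there is a constant $C>0$, independent of $r$, $z$ and $t$, such that whenever $\varphi(t)>1$ one has $\varphi(t)^{p(t)}\le C\,\varphi(t)^{p(\theta)}$.
   Context: $\mathbb{D}$ is the open unit disk. $p$ is $\log$-H\"older continuous if there is $C_{\log}>0$ with $|p(x)-p(y)|\le C_{\log}/\log(1/|x-y|)$ for all $x,y\in[0,2\pi]$. *)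

theory Defs
  imports "HOL-Analysis.Analysis"
begin

text \<open>log-Hoelder continuity on [0,2pi], in the standard form restricted to
  0 < |x-y| < 1/2 (where log(1/|x-y|) is positive).\<close>
definition log_hoelder :: "(real \<Rightarrow> real) \<Rightarrow> bool" where
  "log_hoelder p \<longleftrightarrow> (\<exists>Clog>0. \<forall>x\<in>{0..2*pi}. \<forall>y\<in>{0..2*pi}.
      0 < \<bar>x - y\<bar> \<and> \<bar>x - y\<bar> < 1/2 \<longrightarrow> \<bar>p x - p y\<bar> \<le> Clog / ln (1 / \<bar>x - y\<bar>))"

definition phi_fun :: "(real \<Rightarrow> real) \<Rightarrow> real \<Rightarrow> complex \<Rightarrow> real \<Rightarrow> real \<Rightarrow> real" where
  "phi_fun q r z \<theta> t = (1 - cmod z) powr (1 / q \<theta>) / cmod (1 - complex_of_real (cmod z * r) * cis (t - \<theta>))"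

end

theory Submission
  imports Defs
begin

lemma sin_lower: fixes y :: real assumes "0 \<le> y" "y \<le> 2" shows "y / 3 \<le> sin y"
proof -
  have "\<bar>sin y - (\<Sum>m<3. sin_coeff m * y ^ m)\<bar> \<le> inverse (fact 3) * \<bar>y\<bar> ^ 3"
    by (rule Maclaurin_sin_bound)
  moreover have "(\<Sum>m<3. sin_coeff m * y ^ m) = y"
    by (simp add: numeral_3_eq_3 sin_coeff_def)
  ultimately have "\<bar>sin y - y\<bar> \<le> y ^ 3 / 6" using assms by (simp add: fact_numeral)
  moreover have "y ^ 3 \<le> 4 * y"
  proof -
    have "y * y \<le> 2 * 2" using assms by (intro mult_mono) auto
    then have "y * (y * y) \<le> y * 4" using assms by (intro mult_left_mono) auto
    then show ?thesis by (simp add: power3_eq_cube mult.commute)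
  qed
  ultimately show ?thesis by linarith
qed

lemma norm_sq: fixes \<rho> s :: real
  shows "cmod (1 - complex_of_real \<rho> * cis s) ^ 2 = (1 - \<rho>)^2 + 4 * \<rho> * sin (s/2) ^ 2"
proof -
  have "cmod (1 - complex_of_real \<rho> * cis s) ^ 2 = (1 - \<rho> * cos s)^2 + (\<rho> * sin s)^2"
    by (simp add: cmod_power2)
  also have "\<dots> = 1 - 2 * \<rho> * cos s + \<rho>^2 * (sin s ^ 2 + cos s ^ 2)"
    by algebra
  also have "\<dots> = 1 - 2 * \<rho> * cos s + \<rho>^2" by simp
  also have "cos s = 1 - 2 * sin (s/2) ^ 2" using cos_double_sin[of "s/2"] by simp
  finally show ?thesis by (simp add: power2_eq_square algebra_simps)
qed

lemma norm_lower_d: fixes \<rho> s d :: real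
  assumes "1/4 \<le> \<rho>" "\<bar>s\<bar> \<le> 2*pi" "d = min \<bar>s\<bar> (2*pi - \<bar>s\<bar>)"
  shows "d/6 \<le> cmod (1 - complex_of_real \<rho> * cis s)"
proof -
  have d0: "0 \<le> d" "d \<le> pi" using assms by auto
  have "sin (d/2) \<ge> (d/2)/3" using d0 pi_less_4 by (intro sin_lower) auto
  moreover have "sin (d/2) = sin (\<bar>s\<bar>/2)"
  proof (cases "\<bar>s\<bar> \<le> pi")
    case True then show ?thesis using assms by auto
  next
    case False then have "d = 2*pi - \<bar>s\<bar>" using assms by auto
    then have "d/2 = pi - \<bar>s\<bar>/2" by simp
    then show ?thesis by (metis sin_pi_minus)
  qed
  moreover have "\<bar>sin (s/2)\<bar> = \<bar>sin (\<bar>s\<bar>/2)\<bar>"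
    by (cases "s \<ge> 0") auto
  ultimately have h: "d/6 \<le> \<bar>sin (s/2)\<bar>" by auto
  have "(d/6)^2 \<le> \<bar>sin (s/2)\<bar>^2" using h d0 by (intro power_mono) auto
  also have "\<dots> \<le> 4 * \<rho> * sin (s/2) ^ 2"
  proof -
    have "1 \<le> 4 * \<rho>" using assms by simp
    then show ?thesis using mult_right_mono[of 1 "4*\<rho>" "sin (s/2)^2"] by simp
  qed
  also have "\<dots> \<le> cmod (1 - complex_of_real \<rho> * cis s) ^ 2" by (simp add: norm_sq)
  finally show ?thesis by (rule power2_le_imp_le) simp
qed

lemma norm_lower_1: fixes \<rho> s :: real
  assumes "0 \<le> \<rho>" "\<rho> < 1"
  shows "1 - \<rho> \<le> cmod (1 - complex_of_real \<rho> * cis s)"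
proof -
  have "(1 - \<rho>)^2 \<le> cmod (1 - complex_of_real \<rho> * cis s) ^ 2"
    using assms by (simp add: norm_sq)
  then show ?thesis by (rule power2_le_imp_le) simp
qed

lemma hoelder_mono:
  fixes p :: "real \<Rightarrow> real"
  assumes H: "\<forall>x\<in>{0..2*pi}. \<forall>y\<in>{0..2*pi}.
      0 < \<bar>x - y\<bar> \<and> \<bar>x - y\<bar> < 1/2 \<longrightarrow> \<bar>p x - p y\<bar> \<le> Clog / ln (1 / \<bar>x - y\<bar>)"
    and C: "Clog > 0" and x: "x \<in> {0..2*pi}" and y: "y \<in> {0..2*pi}"
    and e: "\<bar>x - y\<bar> \<le> e" "0 < e" "e < 1/2"
  shows "\<bar>p x - p y\<bar> \<le> Clog / ln (1 / e)"
proof -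
  have le: "0 < ln (1/e)" using e by simp
  show ?thesis
  proof (cases "x = y")
    case True then show ?thesis using le C by simp
  next
    case False
    then have a: "0 < \<bar>x - y\<bar>" by simp
    then have "\<bar>p x - p y\<bar> \<le> Clog / ln (1 / \<bar>x - y\<bar>)" using H x y e by auto
    also have "\<dots> \<le> Clog / ln (1 / e)"
      using a e le C by (intro divide_left_mono) (auto simp: divide_simps)
    finally show ?thesis .
  qed
qed

lemma hoelder_circ:
  fixes p :: "real \<Rightarrow> real"
  assumes H: "\<forall>x\<in>{0..2*pi}. \<forall>y\<in>{0..2*pi}.
      0 < \<bar>x - y\<bar> \<and> \<bar>x - y\<bar> < 1/2 \<longrightarrow> \<bar>p x - p y\<bar> \<le> Clog / ln (1 / \<bar>x - y\<bar>)"
    and C: "Clog > 0" and x: "t \<in> {0..2*pi}" and y: "\<theta> \<in> {0..2*pi}"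
    and per: "p 0 = p (2*pi)"
    and d: "d = min \<bar>t - \<theta>\<bar> (2*pi - \<bar>t - \<theta>\<bar>)" "0 < d" "d < 1/2"
  shows "\<bar>p t - p \<theta>\<bar> \<le> 2 * Clog / ln (1 / d)"
proof -
  have le: "0 < ln (1/d)" using d by simp
  have pos: "0 \<le> Clog / ln (1 / d)" using le C by simp
  show ?thesis
  proof (cases "\<bar>t - \<theta>\<bar> \<le> pi")
    case True
    then have "\<bar>t - \<theta>\<bar> \<le> d" using d by auto
    then have "\<bar>p t - p \<theta>\<bar> \<le> Clog / ln (1 / d)" using hoelder_mono[OF H C x y, of d] d by blast
    then show ?thesis using pos by simp
  next
    case False
    then have dd: "d = 2*pi - \<bar>t - \<theta>\<bar>" using d by auto
    show ?thesis
    proof (cases "t < \<theta>")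
      case True
      have "\<bar>p t - p 0\<bar> \<le> Clog / ln (1 / d)"
        by (rule hoelder_mono[OF H C]) (use dd True x y d in \<open>auto simp: abs_if\<close>)
      moreover have "\<bar>p (2*pi) - p \<theta>\<bar> \<le> Clog / ln (1 / d)"
        by (rule hoelder_mono[OF H C]) (use dd True x y d in \<open>auto simp: abs_if\<close>)
      ultimately show ?thesis using per by linarith
    next
      case False
      have "\<bar>p t - p (2*pi)\<bar> \<le> Clog / ln (1 / d)"
        by (rule hoelder_mono[OF H C]) (use dd False x y d in \<open>auto simp: abs_if\<close>)
      moreover have "\<bar>p 0 - p \<theta>\<bar> \<le> Clog / ln (1 / d)"
        by (rule hoelder_mono[OF H C]) (use dd False x y d in \<open>auto simp: abs_if\<close>)
      ultimately show ?thesis using per by linarith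
    qed
  qed
qed

lemma hoelder_cont:
  fixes p :: "real \<Rightarrow> real"
  assumes H: "\<forall>x\<in>{0..2*pi}. \<forall>y\<in>{0..2*pi}.
      0 < \<bar>x - y\<bar> \<and> \<bar>x - y\<bar> < 1/2 \<longrightarrow> \<bar>p x - p y\<bar> \<le> Clog / ln (1 / \<bar>x - y\<bar>)"
    and C: "Clog > 0"
  shows "continuous_on {0..2*pi} p"
  unfolding continuous_on_iff
proof (intro ballI allI impI)
  fix x e :: real assume x: "x \<in> {0..2*pi}" and e: "0 < e"
  define \<delta> where "\<delta> = min (1/4) (exp (- (Clog / e)))"
  have \<delta>: "0 < \<delta>" "\<delta> < 1/2" unfolding \<delta>_def by auto
  show "\<exists>\<delta>>0. \<forall>x'\<in>{0..2*pi}. dist x' x < \<delta> \<longrightarrow> dist (p x') (p x) < e"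
  proof (intro exI[of _ \<delta>] conjI ballI impI)
    show "0 < \<delta>" by fact
    fix y assume y: "y \<in> {0..2*pi}" and dy: "dist y x < \<delta>"
    show "dist (p y) (p x) < e"
    proof (cases "y = x")
      case True then show ?thesis using e by simp
    next
      case False
      then have a: "0 < \<bar>y - x\<bar>" "\<bar>y - x\<bar> < \<delta>" using dy by (auto simp: dist_real_def)
      have b: "\<bar>p y - p x\<bar> \<le> Clog / ln (1 / \<bar>y - x\<bar>)" by (rule H[rule_format, OF y x]) (use a \<delta> in linarith)
      have "\<bar>y - x\<bar> < exp (- (Clog / e))" using a unfolding \<delta>_def by auto
      then have "ln \<bar>y - x\<bar> < - (Clog / e)" using ln_less_cancel_iff[of "\<bar>y - x\<bar>" "exp (- (Clog / e))"] a(1) by simp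
      then have c: "Clog / e < ln (1 / \<bar>y - x\<bar>)" using a by (simp add: ln_div)
      have cpos: "0 < Clog / e" using C e by simp
      have "Clog / ln (1 / \<bar>y - x\<bar>) < Clog / (Clog / e)"
      proof -
        have lpos: "0 < ln (1 / \<bar>y - x\<bar>)" using c cpos by linarith
        show ?thesis using c cpos C lpos by (intro divide_strict_left_mono mult_pos_pos) auto
      qed
      also have "\<dots> = e" using C by simp
      finally show ?thesis using b by (simp add: dist_real_def)
    qed
  qed
qed

theorem lemma2p11:
  fixes p q :: "real \<Rightarrow> real"
  assumes p_ge: "\<forall>x\<in>{0..2*pi}. p x \<ge> 1"
    and p_meas: "p \<in> borel_measurable (lebesgue_on {0..2*pi})"
    and p_ess_bdd: "\<exists>M. AE x in lebesgue_on {0..2*pi}. p x \<le> M"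
    and p_per: "p 0 = p (2*pi)"
    and p_logH: "log_hoelder p"
    and q_ge: "\<forall>x\<in>{0..2*pi}. q x \<ge> 1"
    and pq: "\<forall>x\<in>{0..2*pi}. 1 / p x + 1 / q x = 1"
  shows "\<exists>C>0. \<forall>r z \<theta> t. 1/2 < r \<and> r < 1 \<and> cmod z < 1 \<and> \<theta> \<in> {0..2*pi}
            \<and> z = complex_of_real (cmod z) * cis \<theta> \<and> t \<in> {0..2*pi}
            \<and> phi_fun q r z \<theta> t > 1
          \<longrightarrow> phi_fun q r z \<theta> t powr p t \<le> C * phi_fun q r z \<theta> t powr p \<theta>"
proof -
  obtain Clog where C: "Clog > 0" and H: "\<forall>x\<in>{0..2*pi}. \<forall>y\<in>{0..2*pi}.
      0 < \<bar>x - y\<bar> \<and> \<bar>x - y\<bar> < 1/2 \<longrightarrow> \<bar>p x - p y\<bar> \<le> Clog / ln (1 / \<bar>x - y\<bar>)"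
    using p_logH unfolding log_hoelder_def by blast
  have cont: "continuous_on {0..2*pi} p" by (rule hoelder_cont[OF H C])
  obtain xm where xm: "xm \<in> {0..2*pi}" "\<forall>y\<in>{0..2*pi}. p y \<le> p xm"
    using continuous_attains_sup[OF compact_Icc _ cont] pi_gt_zero by fastforce
  define P where "P = p xm"
  have P: "\<And>y. y \<in> {0..2*pi} \<Longrightarrow> p y \<le> P" using xm unfolding P_def by blast
  define E where "E = exp (2 * Clog * (ln 6 / ln 2 + 1))"
  define K where "K = E + 12 powr P"
  have E1: "1 \<le> E" unfolding E_def using C by (simp add: one_le_exp_iff)
  have K1: "1 \<le> K" unfolding K_def using E1 by (simp add: add_increasing2)
  show ?thesis
  proof (intro exI[of _ K] conjI allI impI)
    show "0 < K" using K1 by simp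
    fix r :: real and z :: complex and \<theta> t :: real
    assume A: "1/2 < r \<and> r < 1 \<and> cmod z < 1 \<and> \<theta> \<in> {0..2*pi}
            \<and> z = complex_of_real (cmod z) * cis \<theta> \<and> t \<in> {0..2*pi}
            \<and> phi_fun q r z \<theta> t > 1"
    then have r: "1/2 < r" "r < 1" and z: "cmod z < 1" and th: "\<theta> \<in> {0..2*pi}"
      and t: "t \<in> {0..2*pi}" and phi1: "phi_fun q r z \<theta> t > 1" by auto
    define \<phi> where "\<phi> = phi_fun q r z \<theta> t"
    define \<rho> where "\<rho> = cmod z * r"
    define s where "s = t - \<theta>"
    define D where "D = cmod (1 - complex_of_real \<rho> * cis s)"
    define N where "N = (1 - cmod z) powr (1 / q \<theta>)"
    have \<rho>0: "0 \<le> \<rho>" unfolding \<rho>_def using r by simp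
    have "cmod z * r \<le> 1 * r" using z r by (intro mult_right_mono) auto
    then have \<rho>1: "\<rho> < 1" unfolding \<rho>_def using r by linarith
    note \<rho> = \<rho>0 \<rho>1
    have phiND: "\<phi> = N / D" unfolding \<phi>_def phi_fun_def N_def D_def \<rho>_def s_def by simp
    have "1 \<le> q \<theta>" using q_ge th by blast
    then have q0: "0 \<le> 1 / q \<theta>" by simp
    have N1: "N \<le> 1"
    proof -
      have "N \<le> 1 powr (1 / q \<theta>)" unfolding N_def using z q0 by (intro powr_mono2) auto
      then show ?thesis by simp
    qed
    have N0: "0 \<le> N" unfolding N_def by simp
    have phi1': "\<phi> > 1" using phi1 unfolding \<phi>_def .
    have Dpos: "D > 0"
    proof (rule ccontr)
      assume "\<not> D > 0"
      then have "D = 0" unfolding D_def by simp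
      then show False using phi1' phiND by simp
    qed
    have phiD: "\<phi> \<le> 1 / D" unfolding phiND using N1 Dpos by (intro divide_right_mono) auto
    define \<delta> where "\<delta> = p t - p \<theta>"
    have split: "\<phi> powr p t = \<phi> powr \<delta> * \<phi> powr p \<theta>"
      unfolding \<delta>_def by (simp add: powr_add[symmetric])
    have main: "\<phi> powr \<delta> \<le> K"
    proof (cases "\<delta> \<le> 0")
      case True
      have "\<phi> powr \<delta> \<le> \<phi> powr 0" using True phi1' by (intro powr_mono) auto
      then show ?thesis using phi1' K1 by simp
    next
      case False
      then have dpos: "0 < \<delta>" by simp
      have "1 \<le> p \<theta>" using p_ge th by blast
      then have dP: "\<delta> \<le> P" unfolding \<delta>_def using P[OF t] by linarith
      define d where "d = min \<bar>s\<bar> (2*pi - \<bar>s\<bar>)"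
      have sabs: "\<bar>s\<bar> \<le> 2*pi" unfolding s_def using t th by auto
      show ?thesis
      proof (cases "1/4 \<le> \<rho> \<and> d < 1/2")
        case True
        have dgt: "0 < d"
        proof (rule ccontr)
          assume "\<not> 0 < d"
          then have "d \<le> 0" by simp
          then have "s = 0 \<or> \<bar>s\<bar> = 2*pi" unfolding d_def using sabs by auto
          then have "t = \<theta> \<or> (t = 0 \<and> \<theta> = 2*pi) \<or> (t = 2*pi \<and> \<theta> = 0)"
            using t th unfolding s_def by (auto simp: abs_if split: if_splits)
          then have "p t = p \<theta>" using p_per by auto
          then show False using dpos unfolding \<delta>_def by simp
        qed
        have Dd: "d/6 \<le> D" unfolding D_def using True sabs d_def by (intro norm_lower_d) auto
        have phi6: "\<phi> \<le> 6 / d"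
        proof -
          have "1 / D \<le> 1 / (d/6)" using Dd dgt by (intro divide_left_mono) auto
          then show ?thesis using phiD by simp
        qed
        define L where "L = ln (1 / d)"
        have L2: "ln 2 \<le> L" unfolding L_def using True dgt by (subst ln_le_cancel_iff) (auto simp: field_simps)
        have ln2: "0 < ln (2::real)" by simp
        have Lpos: "0 < L" using L2 ln2 by linarith
        have lnphi: "ln \<phi> \<le> ln 6 + L"
        proof -
          have "ln \<phi> \<le> ln (6 / d)" using phi6 phi1' dgt by (subst ln_le_cancel_iff) auto
          also have "ln (6 / d) = ln 6 + L" unfolding L_def using dgt by (simp add: ln_div)
          finally show ?thesis .
        qed
        have lnphi0: "0 \<le> ln \<phi>" using phi1' by simp
        have dL: "\<delta> \<le> 2 * Clog / L"
        proof -
          have "\<bar>p t - p \<theta>\<bar> \<le> 2 * Clog / ln (1 / d)"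
            by (rule hoelder_circ[OF H C t th p_per]) (use True dgt d_def s_def in auto)
          then show ?thesis unfolding \<delta>_def L_def by simp
        qed
        have "\<delta> * ln \<phi> \<le> (2 * Clog / L) * (ln 6 + L)"
          using dL lnphi dpos lnphi0 C Lpos by (intro mult_mono) auto
        also have "\<dots> = 2 * Clog * (ln 6 / L + 1)" using Lpos by (simp add: field_simps)
        also have "\<dots> \<le> 2 * Clog * (ln 6 / ln 2 + 1)"
        proof -
          have "ln 6 / L \<le> ln 6 / ln 2" using L2 ln2 Lpos by (intro divide_left_mono mult_pos_pos) auto
          then show ?thesis using C by (intro mult_left_mono) auto
        qed
        finally have ex: "\<delta> * ln \<phi> \<le> 2 * Clog * (ln 6 / ln 2 + 1)" .
        have "\<phi> powr \<delta> = exp (\<delta> * ln \<phi>)" using phi1' by (simp add: powr_def mult.commute)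
        also have "\<dots> \<le> E" unfolding E_def using ex by simp
        also have "\<dots> \<le> K" unfolding K_def by simp
        finally show ?thesis .
      next
        case False
        have D12: "1/12 \<le> D"
        proof (cases "\<rho> < 1/4")
          case True
          then show ?thesis using norm_lower_1[OF \<rho>, of s] unfolding D_def by simp
        next
          case False2: False
          then have "1/2 \<le> d" using False by auto
          moreover have "d/6 \<le> D" unfolding D_def using False2 sabs d_def by (intro norm_lower_d) auto
          ultimately show ?thesis by simp
        qed
        have phi12: "\<phi> \<le> 12"
        proof -
          have "1 / D \<le> 1 / (1/12)" using D12 by (intro divide_left_mono) auto
          then show ?thesis using phiD by simp
        qed
        have "\<phi> powr \<delta> \<le> 12 powr \<delta>" using phi12 phi1' dpos by (intro powr_mono2) auto
        also have "\<dots> \<le> 12 powr P" using dP by (intro powr_mono) auto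
        also have "\<dots> \<le> K" unfolding K_def using E1 by simp
        finally show ?thesis .
      qed
    qed
    have "\<phi> powr p t \<le> K * \<phi> powr p \<theta>"
      unfolding split using main by (intro mult_right_mono) auto
    then show "phi_fun q r z \<theta> t powr p t \<le> K * phi_fun q r z \<theta> t powr p \<theta>"
      unfolding \<phi>_def .
  qed
qed

end
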